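(* Let $q\ge4$ be an integer and $f(x)=\log\left|\frac{\sin\pi qx}{\sin\pi x}\right|$. For $t\in\left(\frac{3}{8q},\frac{5}{8q}\right)$ and $t\le s<1/q$, $$G(t,s):=U(s)+V(t,s)<0,$$ where $U(s)=\log\frac{\sin\pi(q^{-1}-s)}{\sin\pi(q^{-1}+s)}$ and $$V(t,s)=f(0)-f(t)+f\left(\frac1q-t-\frac{s-t}{q-1}\right)-f\left(\frac1q-t\right)-f'(t)\frac{s-t}{q-1}.$$
   Context: $f(0)=\log q$ (value of $f$ at $0$ by continuity). *)

theory Defs
  imports "HOL-Analysis.Analysis"
begin

text \<open>f(x) = log |sin(pi q x) / sin(pi x)|, extended by continuity at the
  zeros of sin(pi x) (the integers), where the value is log q.\<close>
definition fq :: "nat \<Rightarrow> real \<Rightarrow> real" where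
  "fq q x = (if sin (pi * x) = 0 then ln (real q)
             else ln \<bar>sin (pi * real q * x) / sin (pi * x)\<bar>)"

definition Uq :: "nat \<Rightarrow> real \<Rightarrow> real" where
  "Uq q s = ln (sin (pi * (1 / real q - s)) / sin (pi * (1 / real q + s)))"

definition Vq :: "nat \<Rightarrow> real \<Rightarrow> real \<Rightarrow> real" where
  "Vq q t s = fq q 0 - fq q t
     + fq q (1 / real q - t - (s - t) / (real q - 1)) - fq q (1 / real q - t)
     - deriv (fq q) t * ((s - t) / (real q - 1))"

definition Gq :: "nat \<Rightarrow> real \<Rightarrow> real \<Rightarrow> real" where
  "Gq q t s = Uq q s + Vq q t s"

end

theory Submission
  imports Defs
begin

lemma sin_concave_tangent:
  fixes z w :: real
  assumes "0 \<le> z" "z \<le> pi" "0 \<le> w" "w \<le> pi"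
  shows "sin w \<le> sin z + cos z * (w - z)"
proof (cases "z < w")
  case True
  obtain \<xi> where x: "z < \<xi>" "\<xi> < w" "sin w - sin z = (w - z) * cos \<xi>"
    using MVT2[OF True, of sin cos] by (auto intro: DERIV_sin)
  have "cos \<xi> \<le> cos z" using x assms by (intro cos_monotone_0_pi_le) auto
  hence "(w - z) * cos \<xi> \<le> (w - z) * cos z" using True by (intro mult_left_mono) auto
  thus ?thesis using x by (simp add: algebra_simps)
next
  case False
  show ?thesis
  proof (cases "w < z")
    case True
    obtain \<xi> where x: "w < \<xi>" "\<xi> < z" "sin z - sin w = (z - w) * cos \<xi>"
      using MVT2[OF True, of sin cos] by (auto intro: DERIV_sin)
    have "cos z \<le> cos \<xi>" using x assms by (intro cos_monotone_0_pi_le) auto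
    hence "(z - w) * cos z \<le> (z - w) * cos \<xi>" using True by (intro mult_left_mono) auto
    thus ?thesis using x by (simp add: algebra_simps)
  next
    case False
    with \<open>\<not> z < w\<close> have "w = z" by auto
    thus ?thesis by simp
  qed
qed

lemma ln_sin_tangent:
  fixes z w :: real
  assumes "0 < z" "z < pi" "0 < w" "w < pi"
  shows "ln (sin w) \<le> ln (sin z) + cos z / sin z * (w - z)"
proof -
  have sz: "sin z > 0" "sin w > 0" using assms by (auto intro: sin_gt_zero)
  have "ln (sin w) - ln (sin z) = ln (sin w / sin z)" using sz by (simp add: ln_div)
  also have "\<dots> \<le> sin w / sin z - 1" using sz by (intro ln_le_minus_one) auto
  also have "\<dots> = (sin w - sin z) / sin z" using sz by (simp add: field_simps)
  also have "\<dots> \<le> (cos z * (w - z)) / sin z"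
    using sin_concave_tangent[of z w] assms sz by (intro divide_right_mono) auto
  finally show ?thesis by simp
qed

lemma cos_lower: "cos (x::real) \<ge> 1 - x^2/2"
proof -
  have "cos x = cos (2 * (x/2))" by simp
  also have "\<dots> = 1 - 2 * (sin (x/2))^2" by (rule cos_double_sin)
  finally have e: "cos x = 1 - 2 * (sin (x/2))^2" .
  have "\<bar>sin (x/2)\<bar> \<le> \<bar>x/2\<bar>" by (rule abs_sin_x_le_abs_x)
  hence "(sin (x/2))^2 \<le> (x/2)^2"
    by (metis abs_ge_zero power2_abs power_mono)
  thus ?thesis using e by (simp add: power_divide)
qed

lemma sin_lower: "sin (x::real) \<ge> x - \<bar>x\<bar>^3/6"
proof -
  have "\<bar>sin x - (\<Sum>m<3. sin_coeff m * x ^ m)\<bar> \<le> inverse (fact 3) * \<bar>x\<bar> ^ 3"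
    by (rule Maclaurin_sin_bound)
  moreover have "(\<Sum>m<3. sin_coeff m * x ^ m) = x"
    by (simp add: eval_nat_numeral sin_coeff_def)
  moreover have "inverse (fact 3) = (1/6::real)" by (simp add: eval_nat_numeral)
  ultimately have "\<bar>sin x - x\<bar> \<le> \<bar>x\<bar>^3/6" by simp
  thus ?thesis by linarith
qed

lemma x_cos_le_sin:
  fixes x :: real assumes "0 < x" "x < pi/2"
  shows "x * cos x \<le> sin x"
proof -
  have c: "cos x > 0" using assms by (intro cos_gt_zero_pi) auto
  have "\<bar>x\<bar> \<le> \<bar>tan x\<bar>" using assms by (intro abs_tan_ge) auto
  moreover have "tan x > 0" using assms by (intro tan_gt_zero) auto
  ultimately have "x \<le> sin x / cos x" using assms by (simp add: tan_def)
  thus ?thesis using c by (simp add: field_simps)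
qed

lemma fq_pos:
  assumes "sin (pi * x) > 0" "sin (pi * real q * x) > 0"
  shows "fq q x = ln (sin (pi * real q * x)) - ln (sin (pi * x))"
  using assms by (simp add: fq_def ln_div)

lemma fq_deriv:
  assumes "sin (pi * t) > 0" "sin (pi * real q * t) > 0"
  shows "deriv (fq q) t = pi * real q * cos (pi * real q * t) / sin (pi * real q * t)
                          - pi * cos (pi * t) / sin (pi * t)"
proof -
  define g where "g = (\<lambda>x. ln (sin (pi * real q * x)) - ln (sin (pi * x)))"
  define S where "S = {x. 0 < sin (pi * real q * x) \<and> 0 < sin (pi * x)}"
  have "(g has_field_derivative (pi * real q * cos (pi * real q * t) / sin (pi * real q * t)
                          - pi * cos (pi * t) / sin (pi * t))) (at t)"
    unfolding g_def using assms
    by (auto intro!: derivative_eq_intros simp: field_simps)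
  moreover have "open S" unfolding S_def
    by (intro open_Collect_conj open_Collect_less continuous_intros)
  moreover have "t \<in> S" using assms by (simp add: S_def)
  moreover have "g x = fq q x" if "x \<in> S" for x
    using that by (auto simp: S_def g_def fq_def ln_div abs_of_pos)
  ultimately have "(fq q has_field_derivative (pi * real q * cos (pi * real q * t) / sin (pi * real q * t)
                          - pi * cos (pi * t) / sin (pi * t))) (at t)"
    by (rule has_field_derivative_transform_within_open)
  thus ?thesis by (rule DERIV_imp_deriv)
qed


theorem lemma5p10:
  fixes q :: nat and t s :: real
  assumes "q \<ge> 4"
    and "3 / (8 * real q) < t" and "t < 5 / (8 * real q)"
    and "t \<le> s" and "s < 1 / real q"
  shows "Gq q t s < 0"
proof -
  define Q where "Q = real q"
  have Q4: "Q \<ge> 4" using assms(1) by (simp add: Q_def)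
  define a where "a = pi / Q"
  define th where "th = pi * t"
  define sg where "sg = pi * s"
  define X where "X = pi * Q * t"
  define d where "d = (sg - th) / (Q - 1)"
  define eta where "eta = a - th - d"
  have pib: "157/50 \<le> pi" "pi \<le> 63/20" using pi_approx by auto
  have Qa: "Q * a = pi" using Q4 by (simp add: a_def)
  have a_pos: "a > 0" using Q4 pi_gt_zero by (simp add: a_def)
  have a_le: "a \<le> pi / 4" using Q4 pi_gt_zero unfolding a_def
    by (intro divide_left_mono) auto
  have th_lo: "3 * a / 8 < th"
  proof -
    have "3 / (8 * Q) * pi < t * pi" using mult_strict_right_mono[OF assms(2) pi_gt_zero] by (simp add: Q_def)
    thus ?thesis by (simp add: a_def th_def field_simps)
  qed
  have th_hi: "th < 5 * a / 8"
  proof -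
    have "t * pi < 5 / (8 * Q) * pi" using mult_strict_right_mono[OF assms(3) pi_gt_zero] by (simp add: Q_def)
    thus ?thesis by (simp add: a_def th_def field_simps)
  qed
  have th_sg: "th \<le> sg" using assms(4) pi_gt_zero by (simp add: th_def sg_def)
  have sg_a: "sg < a"
  proof -
    have "s * pi < 1 / Q * pi" using mult_strict_right_mono[OF assms(5) pi_gt_zero] by (simp add: Q_def)
    thus ?thesis by (simp add: a_def sg_def field_simps)
  qed
  have XQ: "X = Q * th" by (simp add: X_def th_def)
  have X_lo: "3 * pi / 8 < X"
  proof -
    have "Q * (3 * a / 8) < Q * th" using th_lo Q4 by (intro mult_strict_left_mono) auto
    thus ?thesis using Qa XQ by (simp add: algebra_simps)
  qed
  have X_hi: "X < 5 * pi / 8"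
  proof -
    have "Q * th < Q * (5 * a / 8)" using th_hi Q4 by (intro mult_strict_left_mono) auto
    thus ?thesis using Qa XQ by (simp add: algebra_simps)
  qed
  have d_nn: "d \<ge> 0" using th_sg Q4 by (simp add: d_def)
  have dQ: "(Q - 1) * d = sg - th" using Q4 by (simp add: d_def)
  have d3: "3 * d \<le> (Q - 1) * d" using d_nn Q4 by (intro mult_right_mono) auto
  have d_lt: "3 * d < a - th" using d3 dQ sg_a by linarith
  have eta_pos: "eta > 0" using d_lt d_nn by (simp add: eta_def)
  have eta_le: "eta \<le> a - th" using d_nn by (simp add: eta_def)
  have Qeta: "Q * eta = pi - X - Q * d"
    using Qa XQ by (simp add: eta_def algebra_simps)
  have Qd: "Q * d < pi - X"
  proof -
    have "Q * d < Q * (a - th)" using d_lt d_nn Q4 by (intro mult_strict_left_mono) auto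
    thus ?thesis using Qa XQ by (simp add: algebra_simps)
  qed
  have asg: "a - sg = eta - (Q - 2) * d" using dQ by (simp add: eta_def algebra_simps)
  have s_th: "sin th > 0" using th_lo a_pos a_le pib using a_pos th_hi th_lo by (intro sin_gt_zero; linarith)
  have s_X: "sin X > 0" using X_lo X_hi pi_gt_zero by (intro sin_gt_zero; linarith)
  have s_w: "sin (a - th) > 0" using th_hi a_pos a_le pib using a_pos th_hi th_lo by (intro sin_gt_zero; linarith)
  have s_asg: "sin (a - sg) > 0" using sg_a th_sg th_lo a_le pib using a_pos th_hi th_lo by (intro sin_gt_zero; linarith)
  have s_apsg: "sin (a + sg) > 0" using sg_a th_sg th_lo a_le pib using a_pos th_hi th_lo by (intro sin_gt_zero; linarith)
  have s_apth: "sin (a + th) > 0" using th_hi th_lo a_le pib using a_pos th_hi th_lo by (intro sin_gt_zero; linarith)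
  have s_eta: "sin eta > 0" using eta_pos eta_le th_lo a_le pib using a_pos th_hi th_lo by (intro sin_gt_zero; linarith)
  have s_Qeta: "sin (Q * eta) > 0"
  proof -
    have "Q * d \<ge> 0" using d_nn Q4 by simp
    thus ?thesis using Qeta Qd X_lo using a_pos th_hi th_lo by (intro sin_gt_zero; linarith)
  qed
  have Q1: "Q - 1 \<noteq> 0" "Q \<noteq> 0" using Q4 by auto
  have f0: "fq q 0 = ln Q" by (simp add: fq_def Q_def)
  have ft: "fq q t = ln (sin X) - ln (sin th)"
  proof -
    have "pi * real q * t = X" "pi * t = th" by (simp_all add: X_def Q_def th_def)
    thus ?thesis using fq_pos[of t q] s_th s_X by simp
  qed
  have e1: "pi * (1 / real q - t) = a - th"
    unfolding a_def th_def Q_def by (simp add: right_diff_distrib)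
  have e2: "pi * real q * (1 / real q - t) = pi - X"
  proof -
    have "pi * real q * (1 / real q - t) = pi * (real q * (1 / real q)) - pi * real q * t"
      by (simp add: algebra_simps)
    also have "\<dots> = pi - X" using Q1 by (simp add: X_def Q_def)
    finally show ?thesis .
  qed
  have f1: "fq q (1 / real q - t) = ln (sin X) - ln (sin (a - th))"
    using fq_pos[of "1 / real q - t" q] s_w s_X unfolding e1 e2 by simp
  have e3: "pi * (1 / real q - t - (s - t) / (real q - 1)) = eta"
  proof -
    have "pi * ((s - t) / (Q - 1)) = d" unfolding d_def sg_def th_def
      by (simp add: right_diff_distrib)
    moreover have "pi * (1 / real q - t - (s - t) / (real q - 1)) 
        = pi * (1 / real q - t) - pi * ((s - t) / (Q - 1))"
      by (simp add: Q_def right_diff_distrib)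
    ultimately show ?thesis using e1 by (simp add: eta_def)
  qed
  have e4: "pi * real q * (1 / real q - t - (s - t) / (real q - 1)) = Q * eta"
  proof -
    have "pi * real q * (1 / real q - t - (s - t) / (real q - 1))
        = Q * (pi * (1 / real q - t - (s - t) / (real q - 1)))" by (simp add: Q_def)
    thus ?thesis by (simp only: e3)
  qed
  have f2: "fq q (1 / real q - t - (s - t) / (real q - 1)) = ln (sin (Q * eta)) - ln (sin eta)"
    using fq_pos[of "1 / real q - t - (s - t) / (real q - 1)" q] s_eta s_Qeta unfolding e3 e4 by simp
  have U: "Uq q s = ln (sin (a - sg)) - ln (sin (a + sg))"
  proof -
    have "pi * (1 / real q - s) = a - sg" "pi * (1 / real q + s) = a + sg"
      unfolding a_def sg_def Q_def by (simp_all add: right_diff_distrib distrib_left)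
    thus ?thesis using s_asg s_apsg by (simp add: Uq_def ln_div)
  qed
  define cX where "cX = cos X / sin X"
  define cth where "cth = cos th / sin th"
  define ceta where "ceta = cos eta / sin eta"
  define cw where "cw = cos (a - th) / sin (a - th)"
  have D: "deriv (fq q) t * ((s - t) / (real q - 1)) = Q * cX * d - cth * d"
  proof -
    have "pi * real q * t = X" "pi * t = th" by (simp_all add: X_def Q_def th_def)
    hence dv: "deriv (fq q) t = pi * Q * cX - pi * cth"
      using fq_deriv[of t q] s_th s_X by (simp add: cX_def cth_def Q_def)
    have pd: "pi * ((s - t) / (Q - 1)) = d" unfolding d_def sg_def th_def
      by (simp add: right_diff_distrib)
    have gen: "\<And>y. (pi * Q * cX - pi * cth) * y = (Q * cX - cth) * (pi * y)"
      by (simp add: algebra_simps)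
    have "deriv (fq q) t * ((s - t) / (Q - 1)) = (Q * cX - cth) * (pi * ((s - t) / (Q - 1)))"
      unfolding dv by (rule gen)
    also have "\<dots> = Q * cX * d - cth * d" unfolding pd
      by (simp add: algebra_simps)
    finally show ?thesis by (simp add: Q_def)
  qed
  have G: "Gq q t s = ln (sin (a - sg)) - ln (sin (a + sg)) + ln Q - (ln (sin X) - ln (sin th))
      + (ln (sin (Q * eta)) - ln (sin eta)) - (ln (sin X) - ln (sin (a - th)))
      - (Q * cX * d - cth * d)"
    unfolding Gq_def Vq_def U f0 ft f1 f2 D by simp
  have B1: "ln (sin (Q * eta)) \<le> ln (sin X) + Q * cX * d"
  proof -
    have "ln (sin (Q * eta)) \<le> ln (sin (pi - X)) + cos (pi - X) / sin (pi - X) * (Q * eta - (pi - X))"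
      using X_lo X_hi Qeta Qd mult_nonneg_nonneg[OF _ d_nn, of Q] Q4 pi_gt_zero
      by (intro ln_sin_tangent; linarith)
    thus ?thesis using Qeta by (simp add: cX_def mult_ac)
  qed
  have B2: "ln (sin (a + th)) \<le> ln (sin (a + sg))"
  proof -
    have "sin (a + th) \<le> sin (a + sg)"
      using th_hi th_lo a_pos a_le pib th_sg sg_a th_lo a_le a_pos by (intro sin_monotone_2pi_le) auto
    thus ?thesis using s_apth by simp
  qed
  have B3: "ln (sin (a - sg)) \<le> ln (sin eta) - ceta * ((Q - 2) * d)"
  proof -
    have "ln (sin (a - sg)) \<le> ln (sin eta) + cos eta / sin eta * ((a - sg) - eta)"
      using th_hi th_lo a_pos a_le pib sg_a th_sg th_lo a_le pib eta_pos eta_le by (intro ln_sin_tangent) auto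
    thus ?thesis using asg by (simp add: ceta_def)
  qed
  have c_w: "cos (a - th) > 0" using th_hi th_lo a_pos a_le pib th_hi th_lo a_le pib by (intro cos_gt_zero_pi) auto
  have B4: "cw \<le> ceta"
  proof -
    have "cos (a - th) \<le> cos eta" using eta_pos eta_le th_lo a_le pib
      by (intro cos_monotone_0_pi_le) auto
    moreover have "sin eta \<le> sin (a - th)" using eta_pos eta_le th_lo a_le pib
      by (intro sin_monotone_2pi_le) auto
    ultimately show ?thesis unfolding cw_def ceta_def using c_w s_eta
      by (intro frac_le) auto
  qed
  have B5: "cth \<le> (Q - 2) * cw"
  proof -
    have "th * cos th \<le> sin th" using th_hi th_lo a_pos a_le pib th_lo a_le a_pos pib by (intro x_cos_le_sin) auto
    hence h1: "cth \<le> 1 / th" using s_th th_lo a_pos by (simp add: cth_def field_simps)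
    define w where "w = a - th"
    have w_pos: "w > 0" using th_hi a_pos by (simp add: w_def)
    have w_le: "w \<le> 1/2" using th_lo a_le pib by (simp add: w_def)
    have "w^2 \<le> (1/2)^2" using th_hi th_lo a_pos a_le pib w_pos w_le by (intro power_mono) auto
    hence "w^2 \<le> 1/4" by (simp add: power_divide)
    hence cw78: "cos w \<ge> 7/8" using cos_lower[of w] by linarith
    have "sin w \<le> w" using th_hi th_lo a_pos a_le pib w_pos by (intro sin_x_le_x) auto
    hence h2: "cos w / w \<le> cw" unfolding cw_def w_def[symmetric] using c_w s_w w_pos
      by (intro divide_left_mono) (auto simp: w_def)
    have "2 * th \<le> (Q - 2) * th" using th_hi th_lo a_pos a_le pib Q4 th_lo a_pos by (intro mult_right_mono) auto
    moreover have "(Q - 2) * (7/8) * th = (7/8) * ((Q - 2) * th)" by simp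
    ultimately have "w \<le> (Q - 2) * (7/8) * th" using th_lo a_pos unfolding w_def by linarith
    hence h3: "1 / th \<le> (Q - 2) * (7/8) / w" using w_pos th_lo a_pos
      by (simp add: field_simps)
    have "(Q - 2) * (7/8) / w \<le> (Q - 2) * (cos w / w)"
    proof -
      have "(7/8) / w \<le> cos w / w" using cw78 w_pos by (intro divide_right_mono) auto
      hence "(Q - 2) * ((7/8) / w) \<le> (Q - 2) * (cos w / w)" using Q4 by (intro mult_left_mono) auto
      thus ?thesis by simp
    qed
    also have "\<dots> \<le> (Q - 2) * cw" using th_hi th_lo a_pos a_le pib h2 Q4 by (intro mult_left_mono) auto
    finally show ?thesis using h1 h3 by linarith
  qed
  have B45: "cth * d \<le> ceta * ((Q - 2) * d)"
  proof -
    have "(Q - 2) * cw \<le> (Q - 2) * ceta" using th_hi th_lo a_pos a_le pib B4 Q4 by (intro mult_left_mono) auto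
    hence "cth \<le> (Q - 2) * ceta" using B5 by linarith
    hence "cth * d \<le> ((Q - 2) * ceta) * d" using th_hi th_lo a_pos a_le pib d_nn by (intro mult_right_mono) auto
    thus ?thesis by (simp add: algebra_simps)
  qed
  have B6: "ln Q + ln (sin th) + ln (sin (a - th)) < ln (sin X) + ln (sin (a + th))"
  proof -
    have st: "sin th \<le> th" using th_hi th_lo a_pos a_le pib th_lo a_pos by (intro sin_x_le_x) auto
    have sw: "sin (a - th) \<le> a - th" using th_hi th_lo a_pos a_le pib th_hi by (intro sin_x_le_x) auto
    have "sin th * sin (a - th) \<le> th * (a - th)" using st sw s_th s_w
      by (intro mult_mono) auto
    hence "Q * (Q * (sin th * sin (a - th))) \<le> Q * (Q * (th * (a - th)))"
      using th_hi th_lo a_pos a_le pib Q4 by (intro mult_left_mono) auto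
    also have "Q * (Q * (th * (a - th))) = X * (pi - X)" using XQ Qa by (simp add: algebra_simps)
    also have "\<dots> \<le> pi^2 / 4"
    proof -
      have "0 \<le> (X - pi/2)^2" by simp
      thus ?thesis by (simp add: power2_eq_square algebra_simps)
    qed
    finally have L: "Q * (Q * (sin th * sin (a - th))) \<le> pi^2 / 4" .
    have sX: "sin X \<ge> 23/25"
    proof -
      have "sin X = cos (pi/2 - X)" by (simp add: cos_sin_eq)
      moreover have "(pi/2 - X)^2 \<le> (4/25)" 
      proof -
        have "\<bar>pi/2 - X\<bar> \<le> 2/5" unfolding abs_le_iff using X_lo X_hi pib by (intro conjI; linarith)
        hence "\<bar>pi/2 - X\<bar>^2 \<le> (2/5)^2" by (intro power_mono) auto
        thus ?thesis by (simp add: power_divide)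
      qed
      ultimately show ?thesis using cos_lower[of "pi/2 - X"] by linarith
    qed
    define y where "y = a + th"
    have y_pos: "y > 0" using a_pos th_lo by (simp add: y_def)
    have y_le: "y \<le> 13/10" using th_hi a_le pib by (simp add: y_def)
    have "y^2 \<le> (13/10)^2" using th_hi th_lo a_pos a_le pib y_pos y_le by (intro power_mono) auto
    hence "y^2 \<le> 169/100" by (simp add: power_divide)
    hence "y * y^2 \<le> y * (169/100)" using th_hi th_lo a_pos a_le pib y_pos by (intro mult_left_mono) auto
    moreover have "y^3 = y * y^2" by (simp add: power3_eq_cube power2_eq_square)
    moreover have "sin y \<ge> y - y^3/6" using sin_lower[of y] y_pos by simp
    ultimately have "sin y \<ge> 71/100 * y" using y_pos by linarith
    hence "Q * sin y \<ge> 71/100 * (Q * y)" using Q4 by (simp add: mult_left_mono)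
    moreover have "Q * y = pi + X" using Qa XQ by (simp add: y_def algebra_simps)
    ultimately have "Q * sin y \<ge> 71/100 * (pi + X)" by simp
    hence Qy: "Q * sin y \<ge> 71/100 * (11 * pi / 8)" using X_lo by (simp add: distrib_left)
    have "23/25 * (71/100 * (11 * pi / 8)) \<le> sin X * (Q * sin y)"
      by (rule mult_mono[OF sX Qy]) (use s_X pi_gt_zero in auto)
    moreover have "pi^2/4 < 23/25 * (71/100 * (11 * pi / 8))"
      using pib pi_gt_zero by (simp add: power2_eq_square)
    ultimately have "Q * (Q * (sin th * sin (a - th))) < Q * (sin X * sin y)"
      using L by (simp add: algebra_simps)
    hence prod: "Q * (sin th * sin (a - th)) < sin X * sin y" using Q4 by simp
    have "ln Q + ln (sin th) + ln (sin (a - th)) = ln (Q * (sin th * sin (a - th)))"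
      using Q4 s_th s_w by (simp add: ln_mult)
    also have "\<dots> < ln (sin X * sin y)"
      using prod Q4 s_th s_w s_X s_apth unfolding y_def by (intro ln_less_cancel_iff[THEN iffD2]) auto
    also have "\<dots> = ln (sin X) + ln (sin (a + th))"
      using s_X s_apth by (simp add: ln_mult y_def)
    finally show ?thesis .
  qed
  show ?thesis using G B1 B2 B3 B45 B6 by linarith
qed

end
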